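(* Let $a,q\ge1$ be integers, let $H=(L\cup R,E(H))$ be a bipartite graph with $|L|=|R|=a$ containing no cycle of length less than $6$ (chosen with the maximum number of edges), $m=|E(H)|$, and let $G=G(E_A,E_B)$ be the directed graph constructed from $E_A,E_B\in\{0,1\}^m$ as in the context. (1) If $E_A\cap E_B\neq\emptyset$ (i.e. there is $j$ with $E_A[j]=E_B[j]=1$), then the girth of $G$ equals $2q$. (2) If $E_A\cap E_B=\emptyset$, then the girth of $G$ is at least $6q$.
   Context: Fix an ordering $E(H)=\{e_1,\dots,e_m\}$ with each $e_j=(l,r)$, $l\in L$, $r\in R$. The graph $G(E_A,E_B)$: for each $i\in\{1,\dots,q\}$ make a copy $l_i$ of every $l\in L$ and a copy $r_i$ of every $r\in R$ (layer $i$ is $L_i\cup R_i$). Pipes: for every $r\in R$ the directed path $r_1\to r_2\to\dots\to r_q$, and for every $l\in L$ the directed path $l_q\to l_{q-1}\to\dots\to l_1$. Input-dependent edges: for each $j$ with $e_j=(l,r)$, if $E_A[j]=1$ add the directed edge $(l_1,r_1)$, and if $E_B[j]=1$ add the directed edge $(r_q,l_q)$. Shortcut tree: a balanced binary tree $T$ with $q$ leaves $t_1,\dots,t_q$, tree edges oriented toward the leaves, plus a directed edge from every vertex of $L_i\cup R_i$ to $t_i$ for each $i$. The girth of $G$ is the length of a shortest directed cycle. *)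

theory Defs
  imports Main "HOL-Library.Extended_Nat"
begin

text \<open>L = {0..<a} (vertices Inl l), R = {0..<a} (vertices Inr r); an edge set
  F \<subseteq> L \<times> R, an edge (l,r) joins Inl l and Inr r.\<close>

definition bip_adj :: "(nat \<times> nat) set \<Rightarrow> nat + nat \<Rightarrow> nat + nat \<Rightarrow> bool" where
  "bip_adj F u v \<longleftrightarrow> (\<exists>l r. (l, r) \<in> F \<and>
      ((u = Inl l \<and> v = Inr r) \<or> (u = Inr r \<and> v = Inl l)))"

definition ucycle :: "('v \<Rightarrow> 'v \<Rightarrow> bool) \<Rightarrow> 'v list \<Rightarrow> bool" where
  "ucycle adj vs \<longleftrightarrow> length vs \<ge> 3 \<and> distinct vs \<and>
     (\<forall>i < length vs. adj (vs ! i) (vs ! ((i + 1) mod length vs)))"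

definition no_short_cycle :: "(nat \<times> nat) set \<Rightarrow> bool" where
  "no_short_cycle F \<longleftrightarrow> (\<forall>vs. ucycle (bip_adj F) vs \<longrightarrow> length vs \<ge> 6)"

definition bip_edges_ok :: "nat \<Rightarrow> (nat \<times> nat) set \<Rightarrow> bool" where
  "bip_edges_ok a F \<longleftrightarrow> F \<subseteq> {..<a} \<times> {..<a}"

definition dcycle :: "('v \<Rightarrow> 'v \<Rightarrow> bool) \<Rightarrow> 'v list \<Rightarrow> bool" where
  "dcycle E vs \<longleftrightarrow> vs \<noteq> [] \<and> distinct vs \<and>
     (\<forall>i < length vs. E (vs ! i) (vs ! ((i + 1) mod length vs)))"

text \<open>Girth: length of a shortest directed cycle (\<infinity> if acyclic).\<close>
definition dgirth :: "('v \<Rightarrow> 'v \<Rightarrow> bool) \<Rightarrow> enat" where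
  "dgirth E = (INF vs \<in> {vs. dcycle E vs}. enat (length vs))"

text \<open>Lv l i = l_i, Rv r i = r_i (layers i = 1..q); Tn k = node k of the shortcut
  tree T, a balanced binary tree in heap numbering: nodes 1..2q-1, node k has
  children 2k and 2k+1, leaves are q..2q-1, and leaf t_i is node q+i-1.\<close>
datatype vert = Lv nat nat | Rv nat nat | Tn nat

text \<open>Hs is the ordering e_1..e_m of E(H) (0-based: e_{j+1} = Hs ! j),
  EA, EB are the bit vectors (EA ! j = True means E_A[j+1] = 1).\<close>
inductive Gedge :: "nat \<Rightarrow> nat \<Rightarrow> (nat \<times> nat) list \<Rightarrow> bool list \<Rightarrow> bool list
    \<Rightarrow> vert \<Rightarrow> vert \<Rightarrow> bool"
  for a q Hs EA EB where
  pipeR: "r < a \<Longrightarrow> 1 \<le> i \<Longrightarrow> i < q \<Longrightarrow> Gedge a q Hs EA EB (Rv r i) (Rv r (i + 1))"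
| pipeL: "l < a \<Longrightarrow> 1 \<le> i \<Longrightarrow> i < q \<Longrightarrow> Gedge a q Hs EA EB (Lv l (i + 1)) (Lv l i)"
| edgeA: "j < length Hs \<Longrightarrow> Hs ! j = (l, r) \<Longrightarrow> EA ! j \<Longrightarrow>
           Gedge a q Hs EA EB (Lv l 1) (Rv r 1)"
| edgeB: "j < length Hs \<Longrightarrow> Hs ! j = (l, r) \<Longrightarrow> EB ! j \<Longrightarrow>
           Gedge a q Hs EA EB (Rv r q) (Lv l q)"
| tree: "1 \<le> k \<Longrightarrow> c \<in> {2 * k, 2 * k + 1} \<Longrightarrow> c \<le> 2 * q - 1 \<Longrightarrow>
           Gedge a q Hs EA EB (Tn k) (Tn c)"
| shortL: "l < a \<Longrightarrow> 1 \<le> i \<Longrightarrow> i \<le> q \<Longrightarrow> Gedge a q Hs EA EB (Lv l i) (Tn (q + i - 1))"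
| shortR: "r < a \<Longrightarrow> 1 \<le> i \<Longrightarrow> i \<le> q \<Longrightarrow> Gedge a q Hs EA EB (Rv r i) (Tn (q + i - 1))"

end

theory Submission
  imports Defs
begin

lemma Gedge_cases:
  assumes "Gedge a q Hs EA EB u v"
  shows "(\<exists>r i. u = Rv r i \<and> v = Rv r (i+1) \<and> 1 \<le> i \<and> i < q)
       \<or> (\<exists>l i. u = Lv l (i+1) \<and> v = Lv l i \<and> 1 \<le> i \<and> i < q)
       \<or> (\<exists>j l r. j < length Hs \<and> Hs ! j = (l, r) \<and> EA ! j \<and> u = Lv l 1 \<and> v = Rv r 1)
       \<or> (\<exists>j l r. j < length Hs \<and> Hs ! j = (l, r) \<and> EB ! j \<and> u = Rv r q \<and> v = Lv l q)
       \<or> (\<exists>k c. u = Tn k \<and> v = Tn c \<and> k < c)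
       \<or> (\<exists>l i k. u = Lv l i \<and> v = Tn k)
       \<or> (\<exists>r i k. u = Rv r i \<and> v = Tn k)"
  using assms
proof (cases rule: Gedge.cases)
  case (tree k c)
  then show ?thesis by auto
qed blast+

fun pos :: "nat \<Rightarrow> vert \<Rightarrow> nat" where
  "pos q (Rv r i) = i - 1"
| "pos q (Lv l i) = 2 * q - i"
| "pos q (Tn k) = 0"

locale cyc =
  fixes a q :: nat and Hs :: "(nat \<times> nat) list" and EA EB :: "bool list" and vs :: "vert list"
  assumes q1: "q \<ge> 1" and dc: "dcycle (Gedge a q Hs EA EB) vs"
begin

abbreviation "n \<equiv> length vs"
definition f :: "nat \<Rightarrow> vert" where "f t = vs ! (t mod n)"

lemma n_pos: "n > 0" using dc unfolding dcycle_def by auto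

lemma fstep: "Gedge a q Hs EA EB (f t) (f (Suc t))"
proof -
  have "t mod n < n" using n_pos by auto
  then have "Gedge a q Hs EA EB (vs ! (t mod n)) (vs ! ((t mod n + 1) mod n))"
    using dc unfolding dcycle_def by blast
  then show ?thesis unfolding f_def by (simp add: mod_Suc_eq)
qed

lemma fper: "f (t + n) = f t" unfolding f_def by simp

lemma finj: "f t = f t' \<Longrightarrow> t mod n = t' mod n"
  unfolding f_def using dc n_pos unfolding dcycle_def
  by (simp add: nth_eq_iff_index_eq)

lemma tn_grow: "f t = Tn k \<Longrightarrow> \<exists>k'. f (t + s) = Tn k' \<and> k' \<ge> k + s"
proof (induction s)
  case 0 then show ?case by auto
next
  case (Suc s)
  then obtain k' where k': "f (t + s) = Tn k'" "k' \<ge> k + s" by auto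
  from fstep[of "t+s"] k' Gedge_cases obtain c where "f (Suc (t+s)) = Tn c" "k' < c"
    by (smt (verit) vert.distinct vert.inject)
  then show ?case using k' by (intro exI[of _ c]) auto
qed

lemma no_tn: "f t \<noteq> Tn k"
proof
  assume "f t = Tn k"
  from tn_grow[OF this, of n] obtain k' where "f (t + n) = Tn k'" "k' \<ge> k + n" by auto
  then show False using fper \<open>f t = Tn k\<close> n_pos by auto
qed

lemma range: "(f t = Rv r i \<longrightarrow> 1 \<le> i \<and> i \<le> q) \<and> (f t = Lv l i \<longrightarrow> 1 \<le> i \<and> i \<le> q)"
  using Gedge_cases[OF fstep[of t]] no_tn[of "Suc t"] q1 by auto

lemma pos_step: "pos q (f (Suc t)) = (pos q (f t) + 1) mod (2 * q)"
  using Gedge_cases[OF fstep[of t]] no_tn[of "Suc t"] q1 by auto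

lemma pos_iter: "pos q (f (t + s)) = (pos q (f t) + s) mod (2 * q)"
proof (induction s)
  case 0
  have "pos q (f t) < 2 * q"
  proof (cases t)
    case 0
    have "pos q (f (0 + n)) < 2*q"
      using pos_step[of "n - 1"] n_pos q1 by (simp add: Suc_diff_1)
    then show ?thesis using 0 fper[of 0] by simp
  next
    case (Suc t') then show ?thesis using pos_step[of t'] q1 by simp
  qed
  then show ?case by simp
next
  case (Suc s) then show ?case using pos_step[of "t+s"] by (simp add: mod_Suc_eq)
qed

lemma n_mod: "n mod (2 * q) = 0"
proof -
  define p where "p = pos q (f 0)"
  have e: "p = (p + n) mod (2*q)" using pos_iter[of 0 n] fper[of 0] unfolding p_def by simp
  have "(p + n) div (2*q) * (2*q) + (p + n) mod (2*q) = p + n" by (rule div_mult_mod_eq)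
  then have "n = (p + n) div (2*q) * (2*q)" using e by linarith
  then have "2*q dvd n" by (metis dvd_triv_right)
  then show ?thesis by simp
qed

lemma W1: "f t = Rv r 1 \<Longrightarrow> s < q \<Longrightarrow> f (t + s) = Rv r (s + 1)"
proof (induction s)
  case 0 then show ?case by simp
next
  case (Suc s)
  then have h: "f (t + s) = Rv r (s + 1)" by simp
  show ?case using Gedge_cases[OF fstep[of "t+s"]] no_tn[of "Suc (t+s)"] h Suc.prems by auto
qed

lemma W3: "f t = Lv l q \<Longrightarrow> s < q \<Longrightarrow> f (t + s) = Lv l (q - s)"
proof (induction s)
  case 0 then show ?case by simp
next
  case (Suc s)
  then have h: "f (t + s) = Lv l (q - s)" by simp
  show ?case using Gedge_cases[OF fstep[of "t+s"]] no_tn[of "Suc (t+s)"] h Suc.prems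
    by (auto simp: Suc_diff_Suc)
qed

lemma block:
  assumes "f t = Rv r 1"
  shows "\<exists>l r' j j'. j < length Hs \<and> Hs ! j = (l, r) \<and> EB ! j \<and> j' < length Hs \<and>
     Hs ! j' = (l, r') \<and> EA ! j' \<and> f (t + q) = Lv l q \<and> f (t + 2 * q) = Rv r' 1"
proof -
  have a1: "f (t + (q - 1)) = Rv r q" using W1[OF assms, of "q - 1"] q1 by simp
  obtain j l where j: "j < length Hs" "Hs ! j = (l, r)" "EB ! j" "f (t + q) = Lv l q"
    using Gedge_cases[OF fstep[of "t + (q - 1)"]] no_tn[of "Suc (t + (q - 1))"] a1 q1
    by (auto simp: Suc_diff_1)
  have a2: "f (t + q + (q - 1)) = Lv l 1" using W3[OF j(4), of "q - 1"] q1 by simp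
  have e: "Suc (t + q + (q - 1)) = t + 2 * q" using q1 by simp
  obtain j' r' where j': "j' < length Hs" "Hs ! j' = (l, r')" "EA ! j'" "f (t + 2 * q) = Rv r' 1"
    using Gedge_cases[OF fstep[of "t + q + (q - 1)"]] no_tn[of "Suc (t + q + (q - 1))"] a2 q1
    unfolding e by auto
  show ?thesis using j j' by blast
qed

lemma n_ge: "n \<ge> 2 * q"
  using n_mod n_pos by (metis dvd_imp_le mod_0_imp_dvd)

lemma exists_R1: "\<exists>t r. f t = Rv r 1"
proof -
  define p where "p = pos q (f 0)"
  have "p = p mod (2*q)" using pos_iter[of 0 0] unfolding p_def by simp
  moreover have "p mod (2*q) < 2*q" using q1 by simp
  ultimately have pl: "p < 2 * q" by simp
  have "pos q (f (0 + (2*q - p))) = 0" using pos_iter[of 0 "2*q - p"] pl unfolding p_def[symmetric] by simp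
  then have z: "pos q (f (2*q - p)) = 0" by simp
  show ?thesis
  proof (cases "f (2*q - p)")
    case (Lv l i)
    then show ?thesis using z range[of "2*q-p" _ i l] q1 by simp
  next
    case (Rv r i)
    then have "i = 1" using z range[of "2*q-p" r i] by simp
    then show ?thesis using Rv by blast
  next
    case (Tn k) then show ?thesis using no_tn by blast
  qed
qed

lemma mod_ne: assumes "0 < d" "d < n" shows "f (t + d) \<noteq> f t"
proof
  assume "f (t + d) = f t"
  then have "(t + d) mod n = t mod n" by (rule finj)
  then have "n dvd d" by (metis add_diff_cancel_left' le_add1 mod_eq_dvd_iff_nat)
  then show False using assms by (simp add: dvd_imp_le leD)
qed

lemma case2:
  assumes dH: "distinct Hs" and nsc: "no_short_cycle (set Hs)"
    and nj: "\<not> (\<exists>j < length Hs. EA ! j \<and> EB ! j)"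
  shows "n \<ge> 6 * q"
proof -
  obtain t0 r0 where t0: "f t0 = Rv r0 1" using exists_R1 by blast
  obtain l0 r1 j j' where b0: "j < length Hs" "Hs ! j = (l0, r0)" "EB ! j" "j' < length Hs"
     "Hs ! j' = (l0, r1)" "EA ! j'" "f (t0 + q) = Lv l0 q" "f (t0 + 2 * q) = Rv r1 1"
    using block[OF t0] by blast
  obtain l1 r2 k k' where b1: "k < length Hs" "Hs ! k = (l1, r1)" "EB ! k" "k' < length Hs"
     "Hs ! k' = (l1, r2)" "EA ! k'" "f (t0 + 2 * q + q) = Lv l1 q" "f (t0 + 2 * q + 2 * q) = Rv r2 1"
    using block[OF b0(8)] by blast
  have n2: "n \<noteq> 2 * q"
  proof
    assume "n = 2 * q"
    then have "f (t0 + 2*q) = f t0" using fper by simp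
    then have "r1 = r0" using t0 b0 by simp
    then have "j = j'" using b0 dH by (metis nth_eq_iff_index_eq)
    then show False using nj b0 by blast
  qed
  have n4: "n \<noteq> 4 * q"
  proof
    assume n4: "n = 4 * q"
    then have "f (t0 + 2*q + 2*q) = f t0" using fper[of t0] by (simp add: add.assoc)
    then have r2: "r2 = r0" using t0 b1 by simp
    have "f (t0 + 2*q) \<noteq> f t0" using mod_ne[of "2*q" t0] n4 q1 by simp
    then have rr: "r1 \<noteq> r0" using t0 b0 by auto
    have "f (t0 + q + 2*q) \<noteq> f (t0 + q)" using mod_ne[of "2*q" "t0+q"] n4 q1 by simp
    then have ll: "l1 \<noteq> l0" using b0 b1 by (auto simp: ac_simps)
    have e: "(l0, r0) \<in> set Hs" "(l0, r1) \<in> set Hs" "(l1, r1) \<in> set Hs" "(l1, r0) \<in> set Hs"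
      using b0 b1 r2 by (metis nth_mem)+
    have "ucycle (bip_adj (set Hs)) [Inr r0, Inl l0, Inr r1, Inl l1]"
      unfolding ucycle_def
    proof (intro conjI allI impI)
      fix i assume "i < length [Inr r0, Inl l0, Inr r1, Inl l1]"
      then have "i = 0 \<or> i = 1 \<or> i = 2 \<or> i = 3" by auto
      then show "bip_adj (set Hs) ([Inr r0, Inl l0, Inr r1, Inl l1] ! i)
          ([Inr r0, Inl l0, Inr r1, Inl l1] ! ((i + 1) mod length [Inr r0, Inl l0, Inr r1, Inl l1]))"
        using e unfolding bip_adj_def by auto
    qed (use rr ll in auto)
    then have "length [Inr r0, Inl l0, Inr r1, Inl l1] \<ge> 6" using nsc unfolding no_short_cycle_def by blast
    then show False by simp
  qed
  obtain c where c: "n = 2 * q * c" using n_mod by (metis mod_0_imp_dvd dvdE)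
  have "c \<noteq> 0" using c n_pos by auto
  moreover have "c \<noteq> 1" using c n2 by auto
  moreover have "c \<noteq> 2" using c n4 by auto
  ultimately have "c \<ge> 3" by auto
  then have "2*q*3 \<le> 2*q*c" by (rule mult_le_mono2)
  then show ?thesis using c by simp
qed

end


lemma short_cycle:
  assumes q1: "q \<ge> 1" and j: "j < length Hs" "Hs ! j = (l, r)" "EA ! j" "EB ! j"
    and la: "l < a" and ra: "r < a"
  shows "dcycle (Gedge a q Hs EA EB) (map (\<lambda>s. if s < q then Rv r (s + 1) else Lv l (2 * q - s)) [0..<2*q])"
proof -
  define g where "g = (\<lambda>s. if s < q then Rv r (s + 1) else Lv l (2 * q - s))"
  have inj: "inj_on g {0..<2*q}"
    unfolding g_def by (rule inj_onI) (auto split: if_splits)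
  have edge: "Gedge a q Hs EA EB (g i) (g ((i + 1) mod (2*q)))" if i: "i < 2*q" for i
  proof -
    consider "i + 1 < q" | "i + 1 = q" | "q \<le> i" "i + 1 < 2*q" | "i + 1 = 2*q" using i by linarith
    then show ?thesis
    proof cases
      case 1 then show ?thesis unfolding g_def using ra Gedge.pipeR[of r a "Suc i" q Hs EA EB] by auto
    next
      case 2
      then have "g i = Rv r q" "g ((i+1) mod (2*q)) = Lv l q" unfolding g_def using q1 by auto
      then show ?thesis using Gedge.edgeB[OF j(1,2,4)] by simp
    next
      case 3
      then have "g i = Lv l ((2*q - (i+1)) + 1)" "g ((i+1) mod (2*q)) = Lv l (2*q - (i+1))"
        unfolding g_def by auto
      moreover have "Gedge a q Hs EA EB (Lv l ((2*q - (i+1)) + 1)) (Lv l (2*q - (i+1)))"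
        using 3 la by (intro Gedge.pipeL) auto
      ultimately show ?thesis by simp
    next
      case 4
      then have "g i = Lv l 1" "g ((i+1) mod (2*q)) = Rv r 1" unfolding g_def using q1 by auto
      then show ?thesis using Gedge.edgeA[OF j(1,2,3)] by simp
    qed
  qed
  show ?thesis unfolding g_def[symmetric] dcycle_def
    using q1 inj edge by (auto simp: distinct_map)
qed

theorem mainTheorem6:
  fixes a q :: nat and Hs :: "(nat \<times> nat) list" and EA EB :: "bool list"
  assumes "a \<ge> 1" and "q \<ge> 1"
    and "distinct Hs" and "bip_edges_ok a (set Hs)"
    and "no_short_cycle (set Hs)"
    and "\<forall>F. bip_edges_ok a F \<and> no_short_cycle F \<longrightarrow> card F \<le> card (set Hs)"
    and "length EA = length Hs" and "length EB = length Hs"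
  shows "((\<exists>j < length Hs. EA ! j \<and> EB ! j) \<longrightarrow>
            dgirth (Gedge a q Hs EA EB) = enat (2 * q))
       \<and> ((\<not> (\<exists>j < length Hs. EA ! j \<and> EB ! j)) \<longrightarrow>
            dgirth (Gedge a q Hs EA EB) \<ge> enat (6 * q))"
proof (intro conjI impI)
  assume "\<exists>j < length Hs. EA ! j \<and> EB ! j"
  then obtain j where j: "j < length Hs" "EA ! j" "EB ! j" by blast
  obtain l r where lr: "Hs ! j = (l, r)" by (cases "Hs ! j")
  have "(l, r) \<in> set Hs" using j lr by (metis nth_mem)
  then have la: "l < a" "r < a" using assms(4) unfolding bip_edges_ok_def by auto
  have up: "dgirth (Gedge a q Hs EA EB) \<le> enat (2 * q)"
  proof -
    let ?c = "map (\<lambda>s. if s < q then Rv r (s + 1) else Lv l (2 * q - s)) [0..<2*q]"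
    have "?c \<in> {vs. dcycle (Gedge a q Hs EA EB) vs}"
      using short_cycle[OF assms(2) j(1) lr j(2,3) la] by simp
    then have "(INF vs \<in> {vs. dcycle (Gedge a q Hs EA EB) vs}. enat (length vs)) \<le> enat (length ?c)"
      by (rule INF_lower)
    then show ?thesis unfolding dgirth_def by simp
  qed
  have lo: "enat (2 * q) \<le> dgirth (Gedge a q Hs EA EB)"
    unfolding dgirth_def
  proof (rule INF_greatest)
    fix vs assume "vs \<in> {vs. dcycle (Gedge a q Hs EA EB) vs}"
    then interpret cyc a q Hs EA EB vs using assms(2) by unfold_locales auto
    show "enat (2 * q) \<le> enat (length vs)" using n_ge by simp
  qed
  show "dgirth (Gedge a q Hs EA EB) = enat (2 * q)" using up lo by (rule antisym)
next
  assume nj: "\<not> (\<exists>j < length Hs. EA ! j \<and> EB ! j)"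
  show "enat (6 * q) \<le> dgirth (Gedge a q Hs EA EB)"
    unfolding dgirth_def
  proof (rule INF_greatest)
    fix vs assume "vs \<in> {vs. dcycle (Gedge a q Hs EA EB) vs}"
    then interpret cyc a q Hs EA EB vs using assms(2) by unfold_locales auto
    show "enat (6 * q) \<le> enat (length vs)" using case2[OF assms(3,5) nj] by simp
  qed
qed

end
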